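(* Let $n=ld$ with positive integers $l,d$, and let $k\geq 2$ be an integer. Let $A\in\mathbb{R}^{m\times n}$ be partitioned into blocks $A=[A[1],A[2],\dots,A[l]]$ with $A[i]\in\mathbb{R}^{m\times d}$, where each $A[i]$ is orthonormal, i.e. $(A[i])^TA[i]=I_d$. Let $\mu_B=\max_{1\leq i<j\leq l}\|(A[i])^TA[j]\|_2$ (spectral norm) and suppose $$\mu_B<\frac{1}{(2k-1)d}.$$ Let $\bm{x}\in\mathbb{R}^n$ be arbitrary, let $\epsilon\geq 0$, let $\bm{z}\in\mathbb{R}^m$ with $\|\bm{z}\|_2\leq\epsilon$, and set $\bm{b}=A\bm{x}+\bm{z}$. Let $\lambda>0$ and let $\bm{x}^{\sharp}$ be an optimal solution of $$\min_{\bm{y}\in\mathbb{R}^n}\ \|\bm{y}\|_{2,1}+\frac{1}{2\lambda}\|\bm{b}-A\bm{y}\|_2^2 .$$ Define $$\beta_1=\frac{\sqrt{1+(k-1)d\mu_B}}{1-(k-1)d\mu_B},\qquad \beta_2=\frac{\sqrt{k}\,d\mu_B}{1-(k-1)d\mu_B},$$ $$f_k(t)=kt^2+3\sqrt{k}\,t+3,\qquad g_k(t)=2kt^2+4\sqrt{k}\,t+1 .$$ Then $$\|A(\bm{x}^{\sharp}-\bm{x})\|_2\leq \frac{2\lambda}{\sqrt{k}\beta_1\lambda+\epsilon}\,\|\bm{x}-\bm{x}_{\{k\}}\|_{2,1}+2(\sqrt{k}\beta_1\lambda+\epsilon),$$ and $$\|\bm{x}^{\sharp}-\bm{x}\|_2\leq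 \frac{2\sqrt{k}\beta_1 f_k(\beta_2)\lambda+2g_k(\beta_2)\epsilon}{\sqrt{k}(1-\sqrt{k}\beta_2)(\sqrt{k}\beta_1\lambda+\epsilon)}\,\|\bm{x}-\bm{x}_{\{k\}}\|_{2,1}+\frac{\big(\sqrt{k}\beta_1(5+2\sqrt{k}\beta_2)\lambda+g_k(\beta_2)\epsilon\big)(\sqrt{k}\beta_1\lambda+\epsilon)}{\sqrt{k}(1-\sqrt{k}\beta_2)\lambda}.$$
   Context: Any $\bm{y}\in\mathbb{R}^n$ is partitioned into $l$ consecutive blocks $\bm{y}[i]=(\bm{y}_{(i-1)d+1},\dots,\bm{y}_{id})^T\in\mathbb{R}^d$, $i=1,\dots,l$, matching the column blocks $A[i]$ (columns $(i-1)d+1,\dots,id$ of $A$). $\|\bm{y}\|_{2,1}=\sum_{i=1}^l\|\bm{y}[i]\|_2$, and $\|\bm{y}\|_{2,0}$ is the number of indices $i$ with $\bm{y}[i]\neq 0$. $\bm{x}_{\{k\}}$ denotes a best $k$-block approximation of $\bm{x}$: $\bm{x}_{\{k\}}\in\arg\min_{\|\bm{y}\|_{2,0}\leq k}\|\bm{y}-\bm{x}\|_2$. *)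

theory Defs
  imports Complex_Main
begin

text \<open>Vectors in R^n are functions nat => real, only indices 0..<n matter.
  Matrices in R^(m x n) are functions nat => nat => real (row, column), indices 0-based.\<close>

definition vnorm :: "nat \<Rightarrow> (nat \<Rightarrow> real) \<Rightarrow> real" where
  "vnorm n x = sqrt (\<Sum>i<n. (x i)\<^sup>2)"

definition vblock :: "nat \<Rightarrow> (nat \<Rightarrow> real) \<Rightarrow> nat \<Rightarrow> (nat \<Rightarrow> real)" where
  "vblock d x i = (\<lambda>j. x (i * d + j))"

definition norm21 :: "nat \<Rightarrow> nat \<Rightarrow> (nat \<Rightarrow> real) \<Rightarrow> real" where
  "norm21 l d x = (\<Sum>i<l. vnorm d (vblock d x i))"

definition norm20 :: "nat \<Rightarrow> nat \<Rightarrow> (nat \<Rightarrow> real) \<Rightarrow> nat" where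
  "norm20 l d x = card {i. i < l \<and> (\<exists>j<d. vblock d x i j \<noteq> 0)}"

definition matvec :: "nat \<Rightarrow> (nat \<Rightarrow> nat \<Rightarrow> real) \<Rightarrow> (nat \<Rightarrow> real) \<Rightarrow> (nat \<Rightarrow> real)" where
  "matvec n A x = (\<lambda>r. \<Sum>c<n. A r c * x c)"

definition block_gram :: "nat \<Rightarrow> nat \<Rightarrow> (nat \<Rightarrow> nat \<Rightarrow> real) \<Rightarrow> nat \<Rightarrow> nat \<Rightarrow> (nat \<Rightarrow> nat \<Rightarrow> real)" where
  "block_gram m d A i j = (\<lambda>p q. \<Sum>r<m. A r (i * d + p) * A r (j * d + q))"

definition spec_norm :: "nat \<Rightarrow> (nat \<Rightarrow> nat \<Rightarrow> real) \<Rightarrow> real" where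
  "spec_norm d M = Sup {vnorm d (matvec d M v) | v. vnorm d v \<le> 1}"

text \<open>Block coherence mu_B = max over i<j of spectral norm of (A[i])^T A[j];
  set to 0 by convention if l = 1 (empty maximum).\<close>
definition block_coherence :: "nat \<Rightarrow> nat \<Rightarrow> nat \<Rightarrow> (nat \<Rightarrow> nat \<Rightarrow> real) \<Rightarrow> real" where
  "block_coherence m l d A =
     Max ({0} \<union> {spec_norm d (block_gram m d A i j) | i j. i < j \<and> j < l})"

definition is_best_block_approx ::
    "nat \<Rightarrow> nat \<Rightarrow> nat \<Rightarrow> (nat \<Rightarrow> real) \<Rightarrow> (nat \<Rightarrow> real) \<Rightarrow> bool" where
  "is_best_block_approx l d k x xk \<longleftrightarrow>
     norm20 l d xk \<le> k \<and>
     (\<forall>y. norm20 l d y \<le> k \<longrightarrow>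
          vnorm (l * d) (\<lambda>i. xk i - x i) \<le> vnorm (l * d) (\<lambda>i. y i - x i))"

end

theory Submission
  imports Defs "HOL-Analysis.L2_Norm"
begin


lemma vnorm_L2: "vnorm n x = L2_set x {..<n}"
  by (simp add: vnorm_def L2_set_def)

lemma sum_blocks: fixes l d :: nat shows "(\<Sum>c<l*d. f c) = (\<Sum>i<l. \<Sum>p<d. f (i*d+p)::real)"
proof -
  have "(\<Sum>c<l*d. f c) = (\<Sum>i<l. sum f {i*d..<i*d+d})"
    using sum.nat_group[of f d l] by simp
  also have "\<dots> = (\<Sum>i<l. \<Sum>p<d. f (i*d+p))"
    by (rule sum.cong[OF refl], subst sum.atLeastLessThan_shift_0) (simp add: lessThan_atLeast0)
  finally show ?thesis .
qed

definition ip :: "nat \<Rightarrow> (nat \<Rightarrow> real) \<Rightarrow> (nat \<Rightarrow> real) \<Rightarrow> real" where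
  "ip m u v = (\<Sum>r<m. u r * v r)"

lemma ip_cs: "ip m u v \<le> vnorm m u * vnorm m v"
proof -
  have "ip m u v \<le> (\<Sum>r<m. \<bar>u r\<bar> * \<bar>v r\<bar>)"
    unfolding ip_def by (rule sum_mono) (simp add: abs_mult[symmetric])
  also have "\<dots> \<le> vnorm m u * vnorm m v" unfolding vnorm_L2 by (rule L2_set_mult_ineq)
  finally show ?thesis .
qed

lemma ip_cs_abs: "\<bar>ip m u v\<bar> \<le> vnorm m u * vnorm m v"
proof -
  have "- ip m u v = ip m (\<lambda>r. - u r) v" by (simp add: ip_def sum_negf)
  moreover have "vnorm m (\<lambda>r. - u r) = vnorm m u" by (simp add: vnorm_def)
  ultimately show ?thesis using ip_cs[of m u v] ip_cs[of m "\<lambda>r. - u r" v] abs_le_iff by fastforce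
qed

lemma vnorm_sq: "(vnorm m u)\<^sup>2 = ip m u u"
  by (simp add: vnorm_def ip_def power2_eq_square sum_nonneg)

lemma vnorm_nonneg[simp]: "0 \<le> vnorm m u" by (simp add: vnorm_def sum_nonneg)

lemma vnorm_tri: "vnorm m (\<lambda>i. u i + v i) \<le> vnorm m u + vnorm m v"
  unfolding vnorm_L2 by (rule L2_set_triangle_ineq)

lemma vnorm_neg: "vnorm m (\<lambda>i. - u i) = vnorm m u" by (simp add: vnorm_def)

lemma ip_comm: "ip m u v = ip m v u" by (simp add: ip_def mult.commute)

lemma vnorm_scale: "vnorm n (\<lambda>i. c * u i) = \<bar>c\<bar> * vnorm n u"
  by (simp add: vnorm_def power_mult_distrib sum_distrib_left[symmetric] real_sqrt_mult)

lemma abs_le_vnorm: "q < n \<Longrightarrow> \<bar>v q\<bar> \<le> vnorm n v"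
proof -
  assume q: "q < n"
  have "\<bar>v q\<bar> = sqrt ((v q)\<^sup>2)" by simp
  also have "\<dots> \<le> vnorm n v" unfolding vnorm_def
    by (rule real_sqrt_le_mono, rule member_le_sum) (use q in auto)
  finally show ?thesis .
qed

lemma vnorm_cong: "(\<And>i. i < n \<Longrightarrow> u i = v i) \<Longrightarrow> vnorm n u = vnorm n v"
  unfolding vnorm_def by (metis (no_types, lifting) lessThan_iff sum.cong)

lemma vnorm_zero: "vnorm n u = 0 \<Longrightarrow> i < n \<Longrightarrow> u i = 0"
  using abs_le_vnorm[of i n u] by simp

lemma spec_bdd: "bdd_above {vnorm d (matvec d M v) | v. vnorm d v \<le> 1}"
proof (rule bdd_aboveI[where M = "\<Sum>p<d. \<Sum>q<d. \<bar>M p q\<bar>"], clarify)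
  fix v :: "nat \<Rightarrow> real" assume v: "vnorm d v \<le> 1"
  have "vnorm d (matvec d M v) \<le> (\<Sum>p<d. \<bar>matvec d M v p\<bar>)"
    unfolding vnorm_L2 by (rule L2_set_le_sum_abs)
  also have "\<dots> \<le> (\<Sum>p<d. \<Sum>q<d. \<bar>M p q\<bar>)"
  proof (rule sum_mono)
    fix p assume "p \<in> {..<d}"
    have "\<bar>matvec d M v p\<bar> \<le> (\<Sum>q<d. \<bar>M p q * v q\<bar>)"
      unfolding matvec_def by (rule sum_abs)
    also have "\<dots> \<le> (\<Sum>q<d. \<bar>M p q\<bar>)"
    proof (rule sum_mono)
      fix q assume "q \<in> {..<d}"
      then have "\<bar>v q\<bar> \<le> 1" using abs_le_vnorm[of q d v] v by simp
      then show "\<bar>M p q * v q\<bar> \<le> \<bar>M p q\<bar>"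
        by (simp add: abs_mult mult_left_le)
    qed
    finally show "\<bar>matvec d M v p\<bar> \<le> (\<Sum>q<d. \<bar>M p q\<bar>)" .
  qed
  finally show "vnorm d (matvec d M v) \<le> (\<Sum>p<d. \<Sum>q<d. \<bar>M p q\<bar>)" .
qed

lemma spec_le: "vnorm d (matvec d M v) \<le> spec_norm d M * vnorm d v"
proof (cases "vnorm d v = 0")
  case True
  then have "\<And>p. matvec d M v p = 0" unfolding matvec_def
    using vnorm_zero[OF True] by (simp add: sum.neutral)
  then have "vnorm d (matvec d M v) = 0" by (simp add: vnorm_def)
  then show ?thesis using True by simp
next
  case False
  define c where "c = vnorm d v"
  have c: "c > 0" using False c_def vnorm_nonneg[of d v] by linarith
  define v' where "v' = (\<lambda>q. (1/c) * v q)"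
  have "vnorm d v' = 1" unfolding v'_def vnorm_scale using c c_def by simp
  then have "vnorm d (matvec d M v') \<le> spec_norm d M"
    unfolding spec_norm_def by (intro cSup_upper[OF _ spec_bdd]) auto
  moreover have "matvec d M v' = (\<lambda>p. (1/c) * matvec d M v p)"
    unfolding matvec_def v'_def by (auto simp: sum_distrib_left algebra_simps)
  ultimately have "(1/c) * vnorm d (matvec d M v) \<le> spec_norm d M"
    using c vnorm_scale[of d "1/c" "matvec d M v"] by simp
  then show ?thesis using c unfolding c_def by (simp add: field_simps)
qed

definition Ab :: "nat \<Rightarrow> (nat \<Rightarrow> nat \<Rightarrow> real) \<Rightarrow> nat \<Rightarrow> (nat \<Rightarrow> real) \<Rightarrow> nat \<Rightarrow> real" where
  "Ab d A i w = (\<lambda>r. \<Sum>p<d. A r (i*d+p) * w p)"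

lemma ip_Ab: "ip m (Ab d A i u) (Ab d A j v) = ip d u (matvec d (block_gram m d A i j) v)"
proof -
  have "ip m (Ab d A i u) (Ab d A j v) = (\<Sum>r<m. \<Sum>p<d. \<Sum>q<d. A r (i*d+p) * u p * (A r (j*d+q) * v q))"
    unfolding ip_def Ab_def by (simp add: sum_product)
  also have "\<dots> = (\<Sum>p<d. \<Sum>q<d. \<Sum>r<m. A r (i*d+p) * u p * (A r (j*d+q) * v q))"
    by (simp add: sum.swap[of _ "{..<m}"])
  also have "\<dots> = ip d u (matvec d (block_gram m d A i j) v)"
    unfolding ip_def matvec_def block_gram_def
    by (simp add: sum_distrib_left sum_distrib_right algebra_simps)
  finally show ?thesis .
qed

lemma sum_le_sqrt_card: "(\<Sum>i\<in>S. f i) \<le> sqrt (card S) * sqrt (\<Sum>i\<in>S. (f i)\<^sup>2)"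
proof -
  have "(\<Sum>i\<in>S. f i) \<le> (\<Sum>i\<in>S. \<bar>f i\<bar> * \<bar>1::real\<bar>)" by (rule sum_mono) simp
  also have "\<dots> \<le> L2_set f S * L2_set (\<lambda>_. 1) S" by (rule L2_set_mult_ineq)
  also have "\<dots> = sqrt (card S) * sqrt (\<Sum>i\<in>S. (f i)\<^sup>2)"
    by (simp add: L2_set_constant L2_set_def)
  finally show ?thesis .
qed

lemma coh_fin: "finite {spec_norm d (block_gram m d A i j) | i j. i < j \<and> j < l}"
proof -
  have "{spec_norm d (block_gram m d A i j) | i j. i < j \<and> j < l}
        \<subseteq> (\<lambda>(i,j). spec_norm d (block_gram m d A i j)) ` ({..<l} \<times> {..<l})"
    by auto
  then show ?thesis by (rule finite_subset) auto
qed

lemma coh_nonneg: "0 \<le> block_coherence m l d A"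
  unfolding block_coherence_def
  by (rule Max_ge) (use coh_fin in auto)

lemma coh_ge: assumes "i < j" "j < l"
  shows "spec_norm d (block_gram m d A i j) \<le> block_coherence m l d A"
proof -
  note fin = coh_fin[of d m A l]
  show ?thesis unfolding block_coherence_def
    by (rule Max_ge) (use fin assms in auto)
qed

locale blk =
  fixes m l d :: nat and A :: "nat \<Rightarrow> nat \<Rightarrow> real" and \<delta> :: real
  assumes orth: "\<forall>i<l. \<forall>p<d. \<forall>q<d. block_gram m d A i i p q = (if p = q then 1 else 0)"
    and coh_le: "block_coherence m l d A \<le> \<delta>"
begin

lemma delta_nonneg: "0 \<le> \<delta>" using coh_le coh_nonneg[of m l d A] by linarith

lemma gram_lt: assumes "i < j" "j < l"
  shows "\<bar>ip m (Ab d A i u) (Ab d A j v)\<bar> \<le> \<delta> * vnorm d u * vnorm d v"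
proof -
  have "\<bar>ip m (Ab d A i u) (Ab d A j v)\<bar> \<le> vnorm d u * vnorm d (matvec d (block_gram m d A i j) v)"
    unfolding ip_Ab by (rule ip_cs_abs)
  also have "\<dots> \<le> vnorm d u * (spec_norm d (block_gram m d A i j) * vnorm d v)"
    by (rule mult_left_mono[OF spec_le]) simp
  also have "\<dots> \<le> vnorm d u * (\<delta> * vnorm d v)"
    using coh_ge[OF assms, of d m A] coh_le
    by (intro mult_left_mono mult_right_mono) auto
  finally show ?thesis by (simp add: algebra_simps)
qed

lemma gram: assumes "i < l" "j < l" "i \<noteq> j"
  shows "\<bar>ip m (Ab d A i u) (Ab d A j v)\<bar> \<le> \<delta> * vnorm d u * vnorm d v"
proof (cases "i < j")
  case True then show ?thesis using gram_lt assms by blast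
next
  case False
  then have "j < i" using assms by simp
  then show ?thesis using gram_lt[of j i v u] assms by (simp add: ip_comm algebra_simps)
qed

lemma ip_self: assumes "i < l" shows "ip m (Ab d A i u) (Ab d A i v) = ip d u v"
proof -
  have "matvec d (block_gram m d A i i) v p = v p" if "p < d" for p
  proof -
    have "(\<Sum>c<d. block_gram m d A i i p c * v c) = (\<Sum>c<d. (if p = c then v c else 0))"
      by (rule sum.cong) (use orth assms that in auto)
    then show ?thesis unfolding matvec_def using that by simp
  qed
  then show ?thesis unfolding ip_Ab unfolding ip_def by (intro sum.cong) auto
qed

definition U :: "(nat \<Rightarrow> nat \<Rightarrow> real) \<Rightarrow> nat set \<Rightarrow> nat \<Rightarrow> real" where
  "U w S = (\<lambda>r. \<Sum>i\<in>S. Ab d A i (w i) r)"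

lemma ip_U: "ip m (U w S) (U w S') = (\<Sum>i\<in>S. \<Sum>j\<in>S'. ip m (Ab d A i (w i)) (Ab d A j (w j)))"
proof -
  have "ip m (U w S) (U w S') = (\<Sum>r<m. \<Sum>i\<in>S. \<Sum>j\<in>S'. Ab d A i (w i) r * Ab d A j (w j) r)"
    unfolding ip_def U_def by (simp add: sum_product)
  also have "\<dots> = (\<Sum>i\<in>S. \<Sum>j\<in>S'. \<Sum>r<m. Ab d A i (w i) r * Ab d A j (w j) r)"
    by (simp add: sum.swap[of _ "{..<m}"])
  finally show ?thesis unfolding ip_def .
qed

lemma cross: assumes "S \<subseteq> {..<l}" "S' \<subseteq> {..<l}" "S \<inter> S' = {}"
  shows "\<bar>ip m (U w S) (U w S')\<bar> \<le> \<delta> * (\<Sum>i\<in>S. vnorm d (w i)) * (\<Sum>j\<in>S'. vnorm d (w j))"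
proof -
  have "\<bar>ip m (U w S) (U w S')\<bar> \<le> (\<Sum>i\<in>S. \<bar>\<Sum>j\<in>S'. ip m (Ab d A i (w i)) (Ab d A j (w j))\<bar>)"
    unfolding ip_U by (rule sum_abs)
  also have "\<dots> \<le> (\<Sum>i\<in>S. \<Sum>j\<in>S'. \<delta> * vnorm d (w i) * vnorm d (w j))"
  proof (rule sum_mono)
    fix i assume i: "i \<in> S"
    have "\<bar>\<Sum>j\<in>S'. ip m (Ab d A i (w i)) (Ab d A j (w j))\<bar> \<le> (\<Sum>j\<in>S'. \<bar>ip m (Ab d A i (w i)) (Ab d A j (w j))\<bar>)"
      by (rule sum_abs)
    also have "\<dots> \<le> (\<Sum>j\<in>S'. \<delta> * vnorm d (w i) * vnorm d (w j))"
      by (rule sum_mono, rule gram) (use assms i in auto)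
    finally show "\<bar>\<Sum>j\<in>S'. ip m (Ab d A i (w i)) (Ab d A j (w j))\<bar> \<le> (\<Sum>j\<in>S'. \<delta> * vnorm d (w i) * vnorm d (w j))" .
  qed
  also have "\<dots> = \<delta> * (\<Sum>i\<in>S. vnorm d (w i)) * (\<Sum>j\<in>S'. vnorm d (w j))"
    by (simp add: sum_product sum_distrib_left algebra_simps)
  finally show ?thesis .
qed

lemma self: assumes "S \<subseteq> {..<l}"
  shows "\<bar>ip m (U w S) (U w S) - (\<Sum>i\<in>S. (vnorm d (w i))\<^sup>2)\<bar>
     \<le> \<delta> * ((\<Sum>i\<in>S. vnorm d (w i))\<^sup>2 - (\<Sum>i\<in>S. (vnorm d (w i))\<^sup>2))"
proof -
  have fin: "finite S" using assms finite_subset by blast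
  let ?x = "\<lambda>i j. ip m (Ab d A i (w i)) (Ab d A j (w j))"
  let ?N = "\<lambda>i. vnorm d (w i)"
  have split: "(\<Sum>j\<in>S. ?x i j) = ?N i ^ 2 + (\<Sum>j\<in>S-{i}. ?x i j)" if i: "i \<in> S" for i
  proof -
    have "(\<Sum>j\<in>S. ?x i j) = ?x i i + (\<Sum>j\<in>S-{i}. ?x i j)"
      using fin i by (simp add: sum.remove)
    moreover have "?x i i = ?N i ^ 2" using ip_self[of i "w i" "w i"] i assms
      by (auto simp: vnorm_sq)
    ultimately show ?thesis by simp
  qed
  have "ip m (U w S) (U w S) - (\<Sum>i\<in>S. ?N i ^ 2) = (\<Sum>i\<in>S. \<Sum>j\<in>S-{i}. ?x i j)"
    unfolding ip_U using split by (simp add: sum.distrib)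
  then have "\<bar>ip m (U w S) (U w S) - (\<Sum>i\<in>S. ?N i ^ 2)\<bar> \<le> (\<Sum>i\<in>S. \<bar>\<Sum>j\<in>S-{i}. ?x i j\<bar>)"
    by (simp add: sum_abs)
  also have "\<dots> \<le> (\<Sum>i\<in>S. \<Sum>j\<in>S-{i}. \<delta> * ?N i * ?N j)"
  proof (rule sum_mono)
    fix i assume i: "i \<in> S"
    have "\<bar>\<Sum>j\<in>S-{i}. ?x i j\<bar> \<le> (\<Sum>j\<in>S-{i}. \<bar>?x i j\<bar>)" by (rule sum_abs)
    also have "\<dots> \<le> (\<Sum>j\<in>S-{i}. \<delta> * ?N i * ?N j)"
      by (rule sum_mono, rule gram) (use assms i in auto)
    finally show "\<bar>\<Sum>j\<in>S-{i}. ?x i j\<bar> \<le> (\<Sum>j\<in>S-{i}. \<delta> * ?N i * ?N j)" .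
  qed
  also have "\<dots> = (\<Sum>i\<in>S. \<delta> * ?N i * ((\<Sum>j\<in>S. ?N j) - ?N i))"
    by (rule sum.cong[OF refl]) (use fin in \<open>simp add: sum_distrib_left[symmetric] sum_diff1\<close>)
  also have "\<dots> = \<delta> * ((\<Sum>i\<in>S. ?N i)\<^sup>2 - (\<Sum>i\<in>S. ?N i ^ 2))"
    by (simp add: algebra_simps power2_eq_square sum_distrib_left sum_distrib_right sum_subtractf sum.distrib)
  finally show ?thesis .
qed

lemma ip_add_right: "ip m u (\<lambda>r. v r + v' r) = ip m u v + ip m u v'"
  unfolding ip_def by (simp add: distrib_left sum.distrib)

lemma U_split: assumes "S \<subseteq> {..<l}"
  shows "U w {..<l} = (\<lambda>r. U w S r + U w ({..<l} - S) r)"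
  unfolding U_def using assms by (auto intro!: ext simp: sum.subset_diff[of S "{..<l}"])

lemma cone: assumes S: "S \<subseteq> {..<l}" and cS: "card S \<le> k" and kd: "(real k - 1) * \<delta> < 1"
  and k1: "k \<ge> 1"
  shows "(1 - (real k - 1) * \<delta>) * sqrt (\<Sum>i\<in>S. (vnorm d (w i))\<^sup>2)
     \<le> sqrt (1 + (real k - 1) * \<delta>) * vnorm m (U w {..<l}) + \<delta> * sqrt k * (\<Sum>i\<in>{..<l}-S. vnorm d (w i))"
proof -
  let ?N = "\<lambda>i. vnorm d (w i)"
  define P2 where "P2 = (\<Sum>i\<in>S. ?N i ^ 2)"
  define P1 where "P1 = (\<Sum>i\<in>S. ?N i)"
  define Q where "Q = ip m (U w S) (U w S)"
  define tS where "tS = (\<Sum>i\<in>{..<l}-S. ?N i)"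
  define a where "a = vnorm m (U w {..<l})"
  define pS where "pS = sqrt P2"
  have P2: "0 \<le> P2" unfolding P2_def by (simp add: sum_nonneg)
  have P1: "0 \<le> P1" unfolding P1_def by (simp add: sum_nonneg)
  have tS: "0 \<le> tS" unfolding tS_def by (simp add: sum_nonneg)
  have a: "0 \<le> a" unfolding a_def by simp
  have dl: "0 \<le> \<delta>" by (rule delta_nonneg)
  have P1s: "P1 \<le> sqrt (card S) * pS" unfolding P1_def pS_def P2_def by (rule sum_le_sqrt_card)
  also have "\<dots> \<le> sqrt k * pS" unfolding pS_def using cS P2 by (intro mult_right_mono) auto
  finally have P1k: "P1 \<le> sqrt k * pS" .
  have "P1\<^sup>2 \<le> (sqrt k * pS)\<^sup>2" using P1k P1 by (intro power_mono) auto
  then have P1sq: "P1\<^sup>2 \<le> k * P2" unfolding pS_def using P2 by (simp add: power_mult_distrib)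
  have sf: "\<bar>Q - P2\<bar> \<le> \<delta> * (P1\<^sup>2 - P2)" unfolding Q_def P2_def P1_def using self[OF S] .
  have "\<delta> * (P1\<^sup>2 - P2) \<le> \<delta> * ((real k - 1) * P2)" using P1sq dl
    by (intro mult_left_mono) (auto simp: algebra_simps)
  then have Qlo: "(1 - (real k - 1) * \<delta>) * P2 \<le> Q" and Qhi: "Q \<le> (1 + (real k - 1) * \<delta>) * P2"
    using sf by (auto simp: algebra_simps abs_le_iff)
  have Qnn: "0 \<le> Q" unfolding Q_def using vnorm_sq[of m "U w S"] by (metis zero_le_power2)
  have nU: "vnorm m (U w S) = sqrt Q" unfolding Q_def using vnorm_sq[of m "U w S"]
    by (metis abs_of_nonneg real_sqrt_abs vnorm_nonneg)
  have nU2: "vnorm m (U w S) \<le> sqrt (1 + (real k - 1) * \<delta>) * pS"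
    unfolding nU pS_def using Qhi by (simp add: real_sqrt_mult[symmetric])
  have "ip m (U w S) (U w {..<l}) = Q + ip m (U w S) (U w ({..<l} - S))"
    unfolding Q_def by (subst U_split[OF S]) (rule ip_add_right)
  then have "Q = ip m (U w S) (U w {..<l}) - ip m (U w S) (U w ({..<l} - S))" by simp
  also have "\<dots> \<le> vnorm m (U w S) * a + \<delta> * P1 * tS"
    using ip_cs[of m "U w S" "U w {..<l}"] cross[OF S, of "{..<l} - S" w]
    unfolding a_def P1_def tS_def by (auto simp: abs_le_iff)
  also have "\<dots> \<le> sqrt (1 + (real k - 1) * \<delta>) * pS * a + \<delta> * (sqrt k * pS) * tS"
    using nU2 P1k a dl tS by (intro add_mono mult_right_mono mult_left_mono) auto
  finally have main: "(1 - (real k - 1) * \<delta>) * pS * pS \<le> pS * (sqrt (1 + (real k - 1) * \<delta>) * a + \<delta> * sqrt k * tS)"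
    using Qlo P2 unfolding pS_def by (simp add: algebra_simps)
  show ?thesis
  proof (cases "pS = 0")
    case True
    have kd0: "0 \<le> (real k - 1) * \<delta>" using k1 dl by simp
    have "0 \<le> sqrt (1 + (real k - 1) * \<delta>) * a + \<delta> * sqrt k * tS"
      using a tS dl kd0 by (intro add_nonneg_nonneg mult_nonneg_nonneg) auto
    then show ?thesis using True unfolding pS_def P2_def a_def tS_def by simp
  next
    case False
    then have "pS > 0" unfolding pS_def using P2 by simp
    then have "(1 - (real k - 1) * \<delta>) * pS \<le> sqrt (1 + (real k - 1) * \<delta>) * a + \<delta> * sqrt k * tS"
      using main by (simp add: mult.commute mult.left_commute)
    then show ?thesis unfolding pS_def P2_def a_def tS_def .
  qed
qed

end

lemma select:
  fixes N :: "nat \<Rightarrow> real"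
  assumes fin: "finite C" and nn: "\<And>i. 0 \<le> N i" and k1: "k \<ge> 1"
  shows "\<exists>T1. T1 \<subseteq> C \<and> card T1 \<le> k \<and> real k * (\<Sum>i\<in>C-T1. (N i)\<^sup>2) \<le> (\<Sum>i\<in>C. N i)\<^sup>2"
proof -
  define F where "F = {S. S \<subseteq> C \<and> card S \<le> k}"
  have finF: "finite F" unfolding F_def using fin by simp
  have neF: "{} \<in> F" unfolding F_def by simp
  define M where "M = Max (sum N ` F)"
  have "M \<in> sum N ` F" unfolding M_def using finF neF by (intro Max_in) auto
  then obtain T1 where T1F: "T1 \<in> F" and T1M: "sum N T1 = M" by auto
  have maxT: "sum N S \<le> sum N T1" if "S \<in> F" for S
    unfolding T1M M_def using finF that by (intro Max_ge) auto
  have T1C: "T1 \<subseteq> C" and cT1: "card T1 \<le> k" using T1F unfolding F_def by auto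
  have finT1: "finite T1" using T1C fin finite_subset by blast
  define R where "R = C - T1"
  define t where "t = (\<Sum>i\<in>C. N i)"
  have swap: "N j \<le> N i" if j: "j \<in> R" and i: "i \<in> T1" for i j
  proof (rule ccontr)
    assume "\<not> N j \<le> N i"
    let ?S = "insert j (T1 - {i})"
    have jn: "j \<notin> T1 - {i}" using j unfolding R_def by auto
    have "card T1 > 0" using finT1 i card_gt_0_iff by blast
    then have "card ?S = card T1" using finT1 i jn by (simp add: card_insert_if)
    then have "?S \<in> F" unfolding F_def using T1C j cT1 unfolding R_def by auto
    moreover have "sum N ?S = N j + sum N T1 - N i"
      using finT1 i jn by (simp add: sum_diff1)
    ultimately show False using maxT[of ?S] \<open>\<not> N j \<le> N i\<close> by simp
  qed
  have small: "N j \<le> 0" if j: "j \<in> R" and c: "card T1 < k" for j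
  proof -
    have jn: "j \<notin> T1" using j unfolding R_def by auto
    have "insert j T1 \<in> F" unfolding F_def using T1C j c finT1 jn unfolding R_def by auto
    moreover have "sum N (insert j T1) = N j + sum N T1" using finT1 jn by simp
    ultimately show ?thesis using maxT[of "insert j T1"] by simp
  qed
  have tnn: "0 \<le> t" unfolding t_def by (simp add: sum_nonneg nn)
  have T1t: "sum N T1 \<le> t" unfolding t_def using fin T1C nn by (intro sum_mono2) auto
  have "real k * (\<Sum>i\<in>R. (N i)\<^sup>2) \<le> t\<^sup>2"
  proof (cases "card T1 < k")
    case True
    then have "\<forall>j\<in>R. N j = 0" using small nn by (meson order_antisym)
    then show ?thesis by simp
  next
    case False
    then have ck: "card T1 = k" using cT1 by simp
    have Nj: "real k * N j \<le> t" if j: "j \<in> R" for j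
    proof -
      have "real k * N j = (\<Sum>i\<in>T1. N j)" using ck by simp
      also have "\<dots> \<le> sum N T1" by (rule sum_mono) (rule swap[OF j])
      finally show ?thesis using T1t by simp
    qed
    have "real k * (\<Sum>i\<in>R. (N i)\<^sup>2) = (\<Sum>i\<in>R. N i * (real k * N i))"
      by (simp add: sum_distrib_left power2_eq_square algebra_simps)
    also have "\<dots> \<le> (\<Sum>i\<in>R. N i * t)"
      by (rule sum_mono) (use Nj nn in \<open>auto intro: mult_left_mono\<close>)
    also have "\<dots> = (\<Sum>i\<in>R. N i) * t" by (simp add: sum_distrib_right)
    also have "\<dots> \<le> t * t"
      using tnn fin nn unfolding R_def t_def by (intro mult_right_mono sum_mono2) auto
    finally show ?thesis by (simp add: power2_eq_square)
  qed
  then show ?thesis using T1C cT1 unfolding R_def t_def by blast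
qed



lemma coefs:
  fixes K b1 c lam e :: real
  assumes K: "K > 0" and b1: "b1 > 0" and c0: "0 \<le> c" and c1: "c < 1" and lam: "lam > 0" and e: "e \<ge> 0"
  defines "s \<equiv> K * b1 * lam + e"
  shows "(2+c)*b1*(2*lam/s) + ((1+c)^2/K)*(4*lam/(2*lam*(1-c)))
           \<le> (2*K*b1*(c^2+3*c+3)*lam + 2*(2*c^2+4*c+1)*e)/(K*(1-c)*s)"
    and "(2+c)*b1*(2*s) + ((1+c)^2/K)*(s^2/(2*lam*(1-c)))
           \<le> (K*b1*(5+2*c)*lam + (2*c^2+4*c+1)*e)*s/(K*(1-c)*lam)"
proof -
  have s: "s > 0" unfolding s_def using K b1 lam e by (simp add: add_pos_nonneg)
  have d: "1 - c > 0" using c1 by simp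
  have "(2+c)*b1*(2*lam/s) + ((1+c)^2/K)*(4*lam/(2*lam*(1-c)))
      = (2*K*b1*lam*(3+c) + 2*(1+c)^2*e)/(K*(1-c)*s)"
    using K s d lam by (simp add: field_simps power2_eq_square) (simp add: s_def algebra_simps)
  also have "\<dots> \<le> (2*K*b1*(c^2+3*c+3)*lam + 2*(2*c^2+4*c+1)*e)/(K*(1-c)*s)"
  proof (rule divide_right_mono)
    have "K*b1*lam*(3+c) \<le> K*b1*lam*(c^2+3*c+3)" using K b1 lam c0
      by (intro mult_left_mono) (auto simp: power2_eq_square)
    moreover have "(1+c)^2*e \<le> (2*c^2+4*c+1)*e" using e c0
      by (intro mult_right_mono) (auto simp: power2_eq_square algebra_simps)
    ultimately show "2*K*b1*lam*(3+c) + 2*(1+c)^2*e \<le> 2*K*b1*(c^2+3*c+3)*lam + 2*(2*c^2+4*c+1)*e"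
      by (simp add: algebra_simps)
    show "0 \<le> K*(1-c)*s" using K d s by simp
  qed
  finally show "(2+c)*b1*(2*lam/s) + ((1+c)^2/K)*(4*lam/(2*lam*(1-c)))
           \<le> (2*K*b1*(c^2+3*c+3)*lam + 2*(2*c^2+4*c+1)*e)/(K*(1-c)*s)" .
  have "(2+c)*b1*(2*s) + ((1+c)^2/K)*(s^2/(2*lam*(1-c)))
      = s * (K*b1*lam*(4*(2+c)*(1-c) + (1+c)^2) + (1+c)^2*e)/(2*K*(1-c)*lam)"
    using K s d lam by (simp add: field_simps power2_eq_square) (simp add: s_def algebra_simps)
  also have "\<dots> \<le> s * (2*K*b1*(5+2*c)*lam + 2*(2*c^2+4*c+1)*e)/(2*K*(1-c)*lam)"
  proof (rule divide_right_mono)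
    have "K*b1*lam*(4*(2+c)*(1-c) + (1+c)^2) \<le> K*b1*lam*(2*(5+2*c))" using K b1 lam c0
      by (intro mult_left_mono) (auto simp: power2_eq_square algebra_simps)
    moreover have "(1+c)^2*e \<le> 2*(2*c^2+4*c+1)*e" using e c0
      by (intro mult_right_mono) (auto simp: power2_eq_square algebra_simps)
    ultimately show "s * (K*b1*lam*(4*(2+c)*(1-c) + (1+c)^2) + (1+c)^2*e) \<le> s * (2*K*b1*(5+2*c)*lam + 2*(2*c^2+4*c+1)*e)"
      using s by (intro mult_left_mono) (auto simp: algebra_simps)
    show "0 \<le> 2*K*(1-c)*lam" using K d lam by simp
  qed
  also have "\<dots> = (K*b1*(5+2*c)*lam + (2*c^2+4*c+1)*e)*s/(K*(1-c)*lam)"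
    using K d lam by (simp add: field_simps)
  finally show "(2+c)*b1*(2*s) + ((1+c)^2/K)*(s^2/(2*lam*(1-c)))
           \<le> (K*b1*(5+2*c)*lam + (2*c^2+4*c+1)*e)*s/(K*(1-c)*lam)" .
qed

lemma alg:
  fixes k :: nat and \<delta> eps lam \<sigma> a t p q r H :: real
  assumes k2: "k \<ge> 2" and dl: "0 \<le> \<delta>" and kd: "(2*real k - 1)*\<delta> < 1" and e: "0 \<le> eps"
    and lam: "0 < lam" and sg: "0 \<le> \<sigma>" and a0: "0 \<le> a" and t0: "0 \<le> t" and p0: "0 \<le> p"
    and q0: "0 \<le> q" and r0: "0 \<le> r"
    and F1: "a\<^sup>2 \<le> 2*eps*a + 2*lam*(sqrt k * p - t + 2*\<sigma>)"
    and F2: "(1 - (real k - 1)*\<delta>)*p \<le> sqrt (1 + (real k - 1)*\<delta>)*a + \<delta>*sqrt k*t"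
    and F3: "(1 - (real k - 1)*\<delta>)*q \<le> sqrt (1 + (real k - 1)*\<delta>)*a + \<delta>*sqrt k*(sqrt k*p + t)"
    and F4: "H \<le> p + q + r" and F5: "sqrt k * r \<le> t"
  defines "\<beta>1 \<equiv> sqrt (1 + (real k - 1)*\<delta>) / (1 - (real k - 1)*\<delta>)"
    and "\<beta>2 \<equiv> sqrt k * \<delta> / (1 - (real k - 1)*\<delta>)"
    and "s \<equiv> sqrt k * (sqrt (1 + (real k - 1)*\<delta>) / (1 - (real k - 1)*\<delta>)) * lam + eps"
  shows "a \<le> 2*lam/s*\<sigma> + 2*s"
    and "H \<le> (2*sqrt k*\<beta>1*(real k*\<beta>2\<^sup>2 + 3*sqrt k*\<beta>2 + 3)*lam + 2*(2*real k*\<beta>2\<^sup>2 + 4*sqrt k*\<beta>2 + 1)*eps)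
              / (sqrt k*(1 - sqrt k*\<beta>2)*s)*\<sigma>
           + (sqrt k*\<beta>1*(5 + 2*sqrt k*\<beta>2)*lam + (2*real k*\<beta>2\<^sup>2 + 4*sqrt k*\<beta>2 + 1)*eps)*s
              / (sqrt k*(1 - sqrt k*\<beta>2)*lam)"
proof -
  define K where "K = sqrt k"
  define D where "D = 1 - (real k - 1)*\<delta>"
  define R where "R = sqrt (1 + (real k - 1)*\<delta>)"
  define c where "c = K * \<beta>2"
  have K: "K > 0" unfolding K_def using k2 by simp
  have KK: "K*K = real k" unfolding K_def by simp
  have kd1: "(real k - 1)*\<delta> \<le> (2*real k - 1)*\<delta>" using dl k2 by (intro mult_right_mono) auto
  have D: "D > 0" unfolding D_def using kd kd1 by simp
  have kdD: "real k * \<delta> < D" unfolding D_def using kd by (simp add: algebra_simps)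
  have R: "R \<ge> 1" unfolding R_def using dl k2 by simp
  have b1: "\<beta>1 = R / D" unfolding \<beta>1_def R_def D_def ..
  have b2: "\<beta>2 = K * \<delta> / D" unfolding \<beta>2_def K_def D_def ..
  have b1p: "\<beta>1 > 0" unfolding b1 using R D by simp
  have b2n: "\<beta>2 \<ge> 0" unfolding b2 using K D dl by simp
  have cdef: "c = real k * \<delta> / D" unfolding c_def b2 using KK by (simp add: mult.assoc[symmetric])
  have c0: "0 \<le> c" unfolding c_def using K b2n by simp
  have c1: "c < 1" unfolding cdef using kdD D by simp
  have b2c: "\<beta>2 = c / K" unfolding c_def using K by simp
  have s_def': "s = K * \<beta>1 * lam + eps" unfolding s_def K_def \<beta>1_def ..
  have s: "s > 0" unfolding s_def' using K b1p lam e by (simp add: add_pos_nonneg)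
  have pb: "p \<le> \<beta>1 * a + \<beta>2 * t"
  proof -
    have "D * p \<le> R * a + \<delta> * K * t" using F2 unfolding D_def R_def K_def .
    then have "p \<le> (R * a + \<delta> * K * t) / D" using D by (simp add: field_simps)
    then show ?thesis unfolding b1 b2 using D by (simp add: field_simps)
  qed
  have qb: "q \<le> \<beta>1 * a + \<beta>2 * (K * p + t)"
  proof -
    have "D * q \<le> R * a + \<delta> * K * (K * p + t)" using F3 unfolding D_def R_def K_def .
    then have "q \<le> (R * a + \<delta> * K * (K * p + t)) / D" using D by (simp add: field_simps)
    then show ?thesis unfolding b1 b2 using D by (simp add: field_simps)
  qed
  have Kp: "K * p \<le> K * \<beta>1 * a + c * t"
    using mult_left_mono[OF pb, of K] K unfolding c_def by (simp add: algebra_simps)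
  have F1': "a\<^sup>2 \<le> 2*s*a - 2*lam*(1-c)*t + 4*lam*\<sigma>"
  proof -
    have "a\<^sup>2 \<le> 2*eps*a + 2*lam*(K * p - t + 2*\<sigma>)" using F1 unfolding K_def .
    also have "\<dots> \<le> 2*eps*a + 2*lam*(K * \<beta>1 * a + c * t - t + 2*\<sigma>)"
      using Kp lam by (intro add_left_mono mult_left_mono) auto
    also have "\<dots> = 2*s*a - 2*lam*(1-c)*t + 4*lam*\<sigma>" unfolding s_def' by (simp add: algebra_simps)
    finally show ?thesis .
  qed
  have tt: "0 \<le> 2*lam*(1-c)*t" using lam c1 t0 by simp
  have A1: "a \<le> 2*lam/s*\<sigma> + 2*s"
  proof (rule ccontr)
    assume "\<not> ?thesis"
    then have ab: "a > 2*lam/s*\<sigma> + 2*s" by simp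
    have l0: "0 \<le> 2*lam/s*\<sigma>" using lam s sg by simp
    then have as: "a \<ge> 2*s" using ab by simp
    have "a * a > (2*lam/s*\<sigma> + 2*s) * a" using ab a0 l0 s by (intro mult_strict_right_mono) auto
    moreover have "(2*lam/s*\<sigma>) * a \<ge> (2*lam/s*\<sigma>) * (2*s)" using as l0 by (intro mult_left_mono) auto
    moreover have "(2*lam/s*\<sigma>) * (2*s) = 4*lam*\<sigma>" using s by simp
    ultimately have "a\<^sup>2 > 4*lam*\<sigma> + 2*s*a" by (simp add: power2_eq_square algebra_simps)
    then show False using F1' tt by simp
  qed
  then show "a \<le> 2*lam/s*\<sigma> + 2*s" .
  have A2: "t \<le> (s\<^sup>2 + 4*lam*\<sigma>) / (2*lam*(1-c))"
  proof -
    have "2*s*a - a\<^sup>2 \<le> s\<^sup>2" using power2_diff[of s a] zero_le_power2[of "s - a"] by linarith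
    then have "2*lam*(1-c)*t \<le> s\<^sup>2 + 4*lam*\<sigma>" using F1' by simp
    then show ?thesis using lam c1 by (simp add: field_simps)
  qed
  have rb: "r \<le> t / K" using F5 K unfolding K_def by (simp add: field_simps)
  have Hb: "H \<le> (2+c)*\<beta>1*a + ((1+c)^2/K)*t"
  proof -
    have "H \<le> p + (\<beta>1 * a + c * p + \<beta>2 * t) + t / K"
      using F4 qb rb unfolding c_def by (simp add: algebra_simps)
    also have "\<dots> = (1+c)*p + \<beta>1 * a + \<beta>2 * t + t / K" by (simp add: algebra_simps)
    also have "\<dots> \<le> (1+c)*(\<beta>1 * a + \<beta>2 * t) + \<beta>1 * a + \<beta>2 * t + t / K"
      using pb c0 by (intro add_right_mono mult_left_mono) auto
    also have "\<dots> = (2+c)*\<beta>1*a + ((1+c)^2/K)*t"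
      unfolding b2c using K by (simp add: field_simps power2_eq_square)
    finally show ?thesis .
  qed
  have co: "((1+c)^2/K) \<ge> 0" using K by simp
  have "H \<le> (2+c)*\<beta>1*(2*lam/s*\<sigma> + 2*s) + ((1+c)^2/K)*((s\<^sup>2 + 4*lam*\<sigma>) / (2*lam*(1-c)))"
    using Hb A1 A2 co b1p c0 by (smt (verit) mult_left_mono mult_nonneg_nonneg)
  also have "\<dots> = ((2+c)*\<beta>1*(2*lam/s) + ((1+c)^2/K)*(4*lam/(2*lam*(1-c)))) * \<sigma>
       + ((2+c)*\<beta>1*(2*s) + ((1+c)^2/K)*(s^2/(2*lam*(1-c))))"
    by (simp add: algebra_simps add_divide_distrib)
  also have "\<dots> \<le> ((2*K*\<beta>1*(c^2+3*c+3)*lam + 2*(2*c^2+4*c+1)*eps)/(K*(1-c)*s)) * \<sigma>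
       + (K*\<beta>1*(5+2*c)*lam + (2*c^2+4*c+1)*eps)*s/(K*(1-c)*lam)"
    using coefs[OF K b1p c0 c1 lam e] sg unfolding s_def'[symmetric]
    by (intro add_mono mult_right_mono) auto
  also have "\<dots> = (2*sqrt k*\<beta>1*(real k*\<beta>2\<^sup>2 + 3*sqrt k*\<beta>2 + 3)*lam + 2*(2*real k*\<beta>2\<^sup>2 + 4*sqrt k*\<beta>2 + 1)*eps)
              / (sqrt k*(1 - sqrt k*\<beta>2)*s)*\<sigma>
           + (sqrt k*\<beta>1*(5 + 2*sqrt k*\<beta>2)*lam + (2*real k*\<beta>2\<^sup>2 + 4*sqrt k*\<beta>2 + 1)*eps)*s
              / (sqrt k*(1 - sqrt k*\<beta>2)*lam)"
  proof -
    have "real k*\<beta>2\<^sup>2 = c^2" unfolding c_def using KK by (simp add: power2_eq_square algebra_simps)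
    moreover have "sqrt k * \<beta>2 = c" unfolding c_def K_def ..
    ultimately have e1: "3*sqrt k*\<beta>2 = 3*c" and e2: "2*sqrt k*\<beta>2 = 2*c" and e3: "4*sqrt k*\<beta>2 = 4*c"
      and e4: "2*real k*\<beta>2\<^sup>2 = 2*c^2" by (simp_all add: mult.assoc)
    have e5: "real k*\<beta>2\<^sup>2 = c^2" "sqrt k * \<beta>2 = c" by fact+
    show ?thesis unfolding K_def e1 e2 e3 e4 e5 by simp
  qed
  finally show "H \<le> (2*sqrt k*\<beta>1*(real k*\<beta>2\<^sup>2 + 3*sqrt k*\<beta>2 + 3)*lam + 2*(2*real k*\<beta>2\<^sup>2 + 4*sqrt k*\<beta>2 + 1)*eps)
              / (sqrt k*(1 - sqrt k*\<beta>2)*s)*\<sigma>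
           + (sqrt k*\<beta>1*(5 + 2*sqrt k*\<beta>2)*lam + (2*real k*\<beta>2\<^sup>2 + 4*sqrt k*\<beta>2 + 1)*eps)*s
              / (sqrt k*(1 - sqrt k*\<beta>2)*lam)" .
qed


theorem theorem3:
  fixes m l d k :: nat
    and A :: "nat \<Rightarrow> nat \<Rightarrow> real"
    and x z xs xk :: "nat \<Rightarrow> real"
    and eps lam :: real
  assumes "l > 0" and "d > 0" and "k \<ge> 2"
    and orth: "\<forall>i<l. \<forall>p<d. \<forall>q<d. block_gram m d A i i p q = (if p = q then 1 else 0)"
    and coh: "block_coherence m l d A < 1 / ((2 * real k - 1) * real d)"
    and "eps \<ge> 0" and "vnorm m z \<le> eps"
    and "lam > 0"
    and opt: "\<forall>y. norm21 l d xs
                   + 1 / (2 * lam) * (vnorm m (\<lambda>r. matvec (l * d) A x r + z r - matvec (l * d) A xs r))\<^sup>2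
                 \<le> norm21 l d y
                   + 1 / (2 * lam) * (vnorm m (\<lambda>r. matvec (l * d) A x r + z r - matvec (l * d) A y r))\<^sup>2"
    and best: "is_best_block_approx l d k x xk"
  shows
    "let \<mu> = block_coherence m l d A;
         \<beta>1 = sqrt (1 + (real k - 1) * real d * \<mu>) / (1 - (real k - 1) * real d * \<mu>);
         \<beta>2 = sqrt (real k) * real d * \<mu> / (1 - (real k - 1) * real d * \<mu>);
         f = (\<lambda>t. real k * t\<^sup>2 + 3 * sqrt (real k) * t + 3);
         g = (\<lambda>t. 2 * real k * t\<^sup>2 + 4 * sqrt (real k) * t + 1);
         \<sigma> = norm21 l d (\<lambda>i. x i - xk i);
         s = sqrt (real k) * \<beta>1 * lam + eps
     in vnorm m (matvec (l * d) A (\<lambda>i. xs i - x i))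
          \<le> 2 * lam / s * \<sigma> + 2 * s
      \<and> vnorm (l * d) (\<lambda>i. xs i - x i)
          \<le> (2 * sqrt (real k) * \<beta>1 * f \<beta>2 * lam + 2 * g \<beta>2 * eps)
               / (sqrt (real k) * (1 - sqrt (real k) * \<beta>2) * s) * \<sigma>
            + (sqrt (real k) * \<beta>1 * (5 + 2 * sqrt (real k) * \<beta>2) * lam + g \<beta>2 * eps) * s
               / (sqrt (real k) * (1 - sqrt (real k) * \<beta>2) * lam)"
proof -
  define \<mu> where "\<mu> = block_coherence m l d A"
  define \<delta> where "\<delta> = real d * \<mu>"
  have \<mu>0: "0 \<le> \<mu>" unfolding \<mu>_def by (rule coh_nonneg)
  have d1: "real d \<ge> 1" using assms(2) by simp
  have \<mu>\<delta>: "\<mu> \<le> \<delta>" unfolding \<delta>_def using \<mu>0 d1 by (simp add: mult_le_cancel_right1)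
  have k2: "k \<ge> 2" by fact
  have pos: "(2 * real k - 1) * real d > 0" using k2 assms(2) by simp
  have kd: "(2 * real k - 1) * \<delta> < 1"
  proof -
    have "\<mu> < 1 / ((2 * real k - 1) * real d)" using coh unfolding \<mu>_def .
    then have "\<mu> * ((2 * real k - 1) * real d) < 1" using pos by (simp add: field_simps)
    then show ?thesis unfolding \<delta>_def by (simp add: algebra_simps)
  qed
  have kd': "(real k - 1) * \<delta> < 1"
  proof -
    have "(real k - 1) * \<delta> \<le> (2 * real k - 1) * \<delta>" using \<mu>0 d1 \<mu>\<delta> k2 by (intro mult_right_mono) auto
    then show ?thesis using kd by simp
  qed
  interpret B: blk m l d A \<delta>
    by unfold_locales (use orth \<mu>\<delta> in \<open>auto simp: \<mu>_def\<close>)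
  have dl0: "0 \<le> \<delta>" by (rule B.delta_nonneg)
  define h where "h = (\<lambda>i. xs i - x i)"
  define w where "w = (\<lambda>i. vblock d h i)"
  define N where "N = (\<lambda>i. vnorm d (w i))"
  define Ah where "Ah = B.U w {..<l}"
  define a where "a = vnorm m Ah"
  have N0: "\<And>i. 0 \<le> N i" unfolding N_def by simp
  have Ah: "matvec (l*d) A h = Ah"
  proof
    fix r
    show "matvec (l*d) A h r = Ah r"
      unfolding matvec_def Ah_def B.U_def Ab_def w_def vblock_def
      by (subst sum_blocks) simp
  qed
  have res: "(\<lambda>r. matvec (l * d) A x r + z r - matvec (l * d) A xs r) = (\<lambda>r. z r - Ah r)"
  proof
    fix r
    have "matvec (l * d) A xs r - matvec (l * d) A x r = matvec (l*d) A h r"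
      unfolding matvec_def h_def by (simp add: sum_subtractf[symmetric] right_diff_distrib)
    then show "matvec (l * d) A x r + z r - matvec (l * d) A xs r = z r - Ah r" using Ah by simp
  qed
  have o1: "norm21 l d xs + 1 / (2 * lam) * (vnorm m (\<lambda>r. z r - Ah r))\<^sup>2
            \<le> norm21 l d x + 1 / (2 * lam) * (vnorm m z)\<^sup>2"
    using opt[rule_format, of x] unfolding res by simp
  have expand: "(vnorm m (\<lambda>r. z r - Ah r))\<^sup>2 = (vnorm m z)\<^sup>2 - 2 * ip m z Ah + a\<^sup>2"
  proof -
    have "(\<Sum>r<m. (z r - Ah r) * (z r - Ah r)) = (\<Sum>r<m. z r * z r - 2 * (z r * Ah r) + Ah r * Ah r)"
      by (rule sum.cong) (auto simp: algebra_simps)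
    also have "\<dots> = (\<Sum>r<m. z r * z r) - 2 * (\<Sum>r<m. z r * Ah r) + (\<Sum>r<m. Ah r * Ah r)"
      by (simp add: sum_subtractf sum.distrib sum_distrib_left)
    finally show ?thesis unfolding vnorm_sq a_def ip_def .
  qed
  have lam: "lam > 0" by fact
  have S1a: "a\<^sup>2 \<le> 2 * ip m z Ah + 2 * lam * (norm21 l d x - norm21 l d xs)"
  proof -
    have "2 * lam * (norm21 l d xs + 1 / (2 * lam) * (vnorm m (\<lambda>r. z r - Ah r))\<^sup>2)
          \<le> 2 * lam * (norm21 l d x + 1 / (2 * lam) * (vnorm m z)\<^sup>2)"
      using o1 lam by (intro mult_left_mono) auto
    then show ?thesis unfolding expand using lam by (simp add: algebra_simps)
  qed
  have eps: "0 \<le> eps" by fact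
  have a0: "0 \<le> a" unfolding a_def by simp
  have "ip m z Ah \<le> vnorm m z * a" unfolding a_def by (rule ip_cs)
  also have "\<dots> \<le> eps * a" using assms(7) a0 by (intro mult_right_mono) auto
  finally have S1: "a\<^sup>2 \<le> 2 * eps * a + 2 * lam * (norm21 l d x - norm21 l d xs)"
    using S1a by simp
  define T where "T = {i. i < l \<and> (\<exists>j<d. vblock d xk i j \<noteq> 0)}"
  have cT: "card T \<le> k" using best unfolding is_best_block_approx_def norm20_def T_def by simp
  have TL: "T \<subseteq> {..<l}" unfolding T_def by auto
  define Tc where "Tc = {..<l} - T"
  define X where "X = (\<lambda>i. vnorm d (vblock d x i))"
  define \<sigma> where "\<sigma> = norm21 l d (\<lambda>i. x i - xk i)"
  define P1 where "P1 = (\<Sum>i\<in>T. N i)"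
  define t where "t = (\<Sum>i\<in>Tc. N i)"
  have per: "X i - vnorm d (vblock d xs i) \<le> (if i \<in> T then N i else 2 * X i - N i)" for i
  proof -
    have e1: "vblock d x i = (\<lambda>j. vblock d xs i j + - w i j)"
      unfolding w_def h_def vblock_def by auto
    have e2: "w i = (\<lambda>j. vblock d xs i j + - vblock d x i j)"
      unfolding w_def h_def vblock_def by auto
    have "X i \<le> vnorm d (vblock d xs i) + N i"
      unfolding X_def N_def using vnorm_tri[of d "vblock d xs i" "\<lambda>j. - w i j"]
      by (subst e1) (simp add: vnorm_neg)
    moreover have "N i \<le> vnorm d (vblock d xs i) + X i"
      unfolding X_def N_def using vnorm_tri[of d "vblock d xs i" "\<lambda>j. - vblock d x i j"]
      by (subst e2) (simp add: vnorm_neg)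
    ultimately show ?thesis by auto
  qed
  have "norm21 l d x - norm21 l d xs = (\<Sum>i<l. X i - vnorm d (vblock d xs i))"
    unfolding norm21_def X_def by (simp add: sum_subtractf)
  also have "\<dots> \<le> (\<Sum>i<l. (if i \<in> T then N i else 2 * X i - N i))"
    by (rule sum_mono) (rule per)
  also have "\<dots> = (\<Sum>i\<in>Tc. (if i \<in> T then N i else 2 * X i - N i)) + (\<Sum>i\<in>T. (if i \<in> T then N i else 2 * X i - N i))"
    unfolding Tc_def using TL by (simp add: sum.subset_diff[of T "{..<l}"])
  also have "\<dots> = (\<Sum>i\<in>Tc. 2 * X i - N i) + P1"
    unfolding P1_def Tc_def by simp
  also have "\<dots> = 2 * (\<Sum>i\<in>Tc. X i) - t + P1"
    unfolding t_def by (simp add: sum_subtractf sum_distrib_left)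
  finally have S2a: "norm21 l d x - norm21 l d xs \<le> 2 * (\<Sum>i\<in>Tc. X i) - t + P1" .
  have sgX: "(\<Sum>i\<in>Tc. X i) \<le> \<sigma>"
  proof -
    have "(\<Sum>i\<in>Tc. X i) = (\<Sum>i\<in>Tc. vnorm d (vblock d (\<lambda>i. x i - xk i) i))"
    proof (rule sum.cong[OF refl])
      fix i assume "i \<in> Tc"
      then have "\<forall>j<d. xk (i*d+j) = 0" unfolding Tc_def T_def vblock_def by auto
      then show "X i = vnorm d (vblock d (\<lambda>i. x i - xk i) i)"
        unfolding X_def by (intro vnorm_cong) (simp add: vblock_def)
    qed
    also have "\<dots> \<le> \<sigma>" unfolding \<sigma>_def norm21_def Tc_def
      by (rule sum_mono2) auto
    finally show ?thesis .
  qed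
  have sg0: "0 \<le> \<sigma>" unfolding \<sigma>_def norm21_def by (simp add: sum_nonneg)
  define p where "p = sqrt (\<Sum>i\<in>T. (N i)\<^sup>2)"
  have p0: "0 \<le> p" unfolding p_def by (simp add: sum_nonneg)
  have P1p: "P1 \<le> sqrt k * p"
  proof -
    have "P1 \<le> sqrt (card T) * p" unfolding P1_def p_def by (rule sum_le_sqrt_card)
    also have "\<dots> \<le> sqrt k * p" using cT p0 by (intro mult_right_mono) auto
    finally show ?thesis .
  qed
  have F1: "a\<^sup>2 \<le> 2*eps*a + 2*lam*(sqrt k * p - t + 2*\<sigma>)"
  proof -
    have "norm21 l d x - norm21 l d xs \<le> sqrt k * p - t + 2*\<sigma>" using S2a sgX P1p by simp
    then have "2*lam*(norm21 l d x - norm21 l d xs) \<le> 2*lam*(sqrt k * p - t + 2*\<sigma>)"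
      using lam by (intro mult_left_mono) auto
    then show ?thesis using S1 by simp
  qed
  have k1: "k \<ge> 1" using k2 by simp
  have F2: "(1 - (real k - 1)*\<delta>)*p \<le> sqrt (1 + (real k - 1)*\<delta>)*a + \<delta>*sqrt k*t"
    using B.cone[OF TL cT kd' k1, of w] unfolding p_def N_def a_def Ah_def t_def Tc_def .
  have finTc: "finite Tc" unfolding Tc_def by simp
  from select[OF finTc N0 k1] obtain T1 where T1all: "T1 \<subseteq> Tc \<and> card T1 \<le> k
    \<and> real k * (\<Sum>i\<in>Tc-T1. (N i)\<^sup>2) \<le> (\<Sum>i\<in>Tc. N i)\<^sup>2" ..
  have T1: "T1 \<subseteq> Tc" and cT1: "card T1 \<le> k"
    and sel: "real k * (\<Sum>i\<in>Tc-T1. (N i)\<^sup>2) \<le> (\<Sum>i\<in>Tc. N i)\<^sup>2"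
    using T1all by auto
  have T1L: "T1 \<subseteq> {..<l}" using T1 unfolding Tc_def by auto
  define q where "q = sqrt (\<Sum>i\<in>T1. (N i)\<^sup>2)"
  define r where "r = sqrt (\<Sum>i\<in>Tc-T1. (N i)\<^sup>2)"
  have q0: "0 \<le> q" unfolding q_def by (simp add: sum_nonneg)
  have r0: "0 \<le> r" unfolding r_def by (simp add: sum_nonneg)
  have t0: "0 \<le> t" unfolding t_def by (simp add: sum_nonneg N0)
  have F3a: "(1 - (real k - 1)*\<delta>)*q \<le> sqrt (1 + (real k - 1)*\<delta>)*a + \<delta>*sqrt k*(\<Sum>i\<in>{..<l}-T1. N i)"
    using B.cone[OF T1L cT1 kd' k1, of w] unfolding q_def N_def a_def Ah_def .
  have "(\<Sum>i\<in>{..<l}-T1. N i) \<le> (\<Sum>i<l. N i)" by (rule sum_mono2) (auto simp: N0)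
  also have "\<dots> = t + P1" unfolding t_def P1_def Tc_def using TL by (simp add: sum.subset_diff[of T "{..<l}"])
  finally have "(\<Sum>i\<in>{..<l}-T1. N i) \<le> sqrt k * p + t" using P1p by simp
  then have F3: "(1 - (real k - 1)*\<delta>)*q \<le> sqrt (1 + (real k - 1)*\<delta>)*a + \<delta>*sqrt k*(sqrt k * p + t)"
  proof -
    have "\<delta>*sqrt k*(\<Sum>i\<in>{..<l}-T1. N i) \<le> \<delta>*sqrt k*(sqrt k * p + t)"
      using \<open>(\<Sum>i\<in>{..<l}-T1. N i) \<le> sqrt k * p + t\<close> dl0 by (intro mult_left_mono) auto
    then show ?thesis using F3a by linarith
  qed
  have F5: "sqrt k * r \<le> t"
  proof -
    have "(sqrt k * r)\<^sup>2 = real k * (\<Sum>i\<in>Tc-T1. (N i)\<^sup>2)" unfolding r_def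
      by (simp add: power_mult_distrib sum_nonneg)
    also have "\<dots> \<le> t\<^sup>2" using sel unfolding t_def .
    finally have "(sqrt k * r)\<^sup>2 \<le> t\<^sup>2" .
    then show ?thesis using t0 by (rule power2_le_imp_le)
  qed
  define H where "H = vnorm (l * d) h"
  have F4: "H \<le> p + q + r"
  proof -
    have Ni: "(N i)\<^sup>2 = (\<Sum>j<d. (h (i*d+j))\<^sup>2)" for i
      unfolding N_def w_def vnorm_sq ip_def vblock_def by (simp add: power2_eq_square)
    have "(\<Sum>c<l*d. (h c)\<^sup>2) = (\<Sum>i<l. (N i)\<^sup>2)" unfolding Ni by (rule sum_blocks)
    also have "\<dots> = (\<Sum>i\<in>T. (N i)\<^sup>2) + (\<Sum>i\<in>T1. (N i)\<^sup>2) + (\<Sum>i\<in>Tc-T1. (N i)\<^sup>2)"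
    proof -
      have "(\<Sum>i<l. (N i)\<^sup>2) = (\<Sum>i\<in>Tc. (N i)\<^sup>2) + (\<Sum>i\<in>T. (N i)\<^sup>2)"
        unfolding Tc_def using TL by (simp add: sum.subset_diff[of T "{..<l}"])
      moreover have "(\<Sum>i\<in>Tc. (N i)\<^sup>2) = (\<Sum>i\<in>Tc-T1. (N i)\<^sup>2) + (\<Sum>i\<in>T1. (N i)\<^sup>2)"
        using T1 finTc by (simp add: sum.subset_diff[of T1 Tc])
      ultimately show ?thesis by simp
    qed
    finally have Hs: "H = sqrt ((\<Sum>i\<in>T. (N i)\<^sup>2) + (\<Sum>i\<in>T1. (N i)\<^sup>2) + (\<Sum>i\<in>Tc-T1. (N i)\<^sup>2))"
      unfolding H_def vnorm_def by simp
    have "H \<le> sqrt ((\<Sum>i\<in>T. (N i)\<^sup>2) + (\<Sum>i\<in>T1. (N i)\<^sup>2)) + r"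
      unfolding Hs r_def by (rule sqrt_add_le_add_sqrt) (auto simp: sum_nonneg add_nonneg_nonneg)
    also have "\<dots> \<le> p + q + r" unfolding p_def q_def
      by (simp add: sqrt_add_le_add_sqrt sum_nonneg)
    finally show ?thesis .
  qed
  note R = alg[OF k2 dl0 kd eps lam sg0 a0 t0 p0 q0 r0 F1 F2 F3 F4 F5]
  have ee: "(real k - 1) * real d * \<mu> = (real k - 1) * \<delta>" unfolding \<delta>_def by simp
  have ee2: "sqrt (real k) * real d * \<mu> = sqrt (real k) * \<delta>" unfolding \<delta>_def by simp
  have aa: "vnorm m (matvec (l * d) A (\<lambda>i. xs i - x i)) = a"
    using Ah unfolding a_def h_def by simp
  show ?thesis
    unfolding Let_def \<mu>_def[symmetric] ee ee2 \<sigma>_def[symmetric] aa H_def[symmetric, unfolded h_def]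
    using R by simp
qed
end
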